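(* Let $\mu\in\mathcal{P}(\mathbb{R})$ and let $F_n:\mathbb{R}\to\mathbb{R}^d$, $n\ge1$, be Borel functions such that the family of pushforward measures $((F_n)_*\mu)_{n\ge1}$ is tight. Then, after passing to a subsequence, there exists a Borel function $F:\mathbb{R}\to\mathbb{R}^d$ such that $(F_n)_*\mu\to F_*\mu$ weakly.
   Context: $(F)_*\mu(A)=\mu(F^{-1}(A))$ denotes the pushforward measure. Weak convergence is with respect to bounded continuous functions. *)

theory Defs
  imports "HOL-Probability.Probability"
begin

definition tight_seq :: "(nat \<Rightarrow> 'a::topological_space measure) \<Rightarrow> bool" where
  "tight_seq M \<longleftrightarrow>
     (\<forall>\<epsilon>>0. \<exists>K. compact K \<and> (\<forall>n. measure (M n) (space (M n) - K) < \<epsilon>))"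

definition weak_conv_seq :: "(nat \<Rightarrow> 'a::topological_space measure) \<Rightarrow> 'a measure \<Rightarrow> bool" where
  "weak_conv_seq M N \<longleftrightarrow>
     (\<forall>f :: 'a \<Rightarrow> real. continuous_on UNIV f \<and> bounded (range f) \<longrightarrow>
        (\<lambda>n. \<integral>x. f x \<partial>M n) \<longlonglongrightarrow> (\<integral>x. f x \<partial>N))"

end

theory Submission
  imports Defs "HOL-Library.Cardinality" "HOL-Library.Diagonal_Subsequence"
begin

definition enc :: "('d::finite \<Rightarrow> bool) \<Rightarrow> nat" where
  "enc = (SOME f. bij_betw f UNIV {0..<2^CARD('d)})"

lemma enc_bij: "bij_betw (enc :: ('d::finite \<Rightarrow> bool) \<Rightarrow> nat) UNIV {0..<2^CARD('d)}"
proof -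
  have c: "card (UNIV :: ('d \<Rightarrow> bool) set) = 2^CARD('d)"
    using card_fun[where 'a='d and 'b=bool] by simp
  obtain h :: "('d \<Rightarrow> bool) \<Rightarrow> nat" where "bij_betw h UNIV {0..<card (UNIV :: ('d \<Rightarrow> bool) set)}"
    using ex_bij_betw_finite_nat[of "UNIV :: ('d \<Rightarrow> bool) set"] by auto
  then have "\<exists>f :: ('d \<Rightarrow> bool) \<Rightarrow> nat. bij_betw f UNIV {0..<2^CARD('d)}" using c by auto
  then show ?thesis unfolding enc_def by (rule someI_ex)
qed

lemma enc_lt: "enc (b :: 'd::finite \<Rightarrow> bool) < 2^CARD('d)"
  using enc_bij[where 'd='d] by (auto simp: bij_betw_def)

lemma enc_inj: "enc (a :: 'd::finite \<Rightarrow> bool) = enc b \<Longrightarrow> a = b"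
  using enc_bij[where 'd='d] by (auto simp: bij_betw_def inj_on_def)

primrec idx :: "nat \<Rightarrow> real^'d::finite \<Rightarrow> nat" where
  "idx 0 y = 0"
| "idx (Suc k) y = 2^CARD('d) * idx k y + enc (\<lambda>i. odd \<lfloor>2^Suc k * y$i\<rfloor>)"

lemma idx_lt: "idx k (y :: real^'d::finite) < 2^(CARD('d)*k)"
proof (induction k)
  case 0 then show ?case by simp
next
  case (Suc k)
  have "idx (Suc k) y < 2^CARD('d) * idx k y + 2^CARD('d)"
    using enc_lt[where 'd='d] by simp
  also have "\<dots> = 2^CARD('d) * (idx k y + 1)" by simp
  also have "\<dots> \<le> 2^CARD('d) * 2^(CARD('d)*k)"
    using Suc by (intro mult_left_mono) auto
  also have "\<dots> = 2^(CARD('d)*Suc k)" by (simp add: power_add[symmetric])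
  finally show ?case .
qed

lemma idx_Suc_div: "idx (Suc k) (y :: real^'d::finite) div 2^CARD('d) = idx k y"
  using enc_lt[where 'd='d] by simp

lemma idx_div: "k \<le> j \<Longrightarrow> idx j (y :: real^'d::finite) div 2^(CARD('d)*(j-k)) = idx k y"
proof (induction j)
  case 0 then show ?case by simp
next
  case (Suc j)
  show ?case
  proof (cases "k = Suc j")
    case True then show ?thesis by simp
  next
    case False
    then have kj: "k \<le> j" using Suc by simp
    have "Suc j - k = Suc (j - k)" using kj by simp
    then have "idx (Suc j) y div 2^(CARD('d)*(Suc j-k)) = idx (Suc j) y div 2^CARD('d) div 2^(CARD('d)*(j-k))"
      by (simp add: div_mult2_eq power_add)
    also have "\<dots> = idx k y" by (simp only: idx_Suc_div Suc.IH[OF kj])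
    finally show ?thesis .
  qed
qed

lemma floor_double: "\<lfloor>2 * x\<rfloor> = 2 * \<lfloor>x :: real\<rfloor> + (if odd \<lfloor>2*x\<rfloor> then 1 else 0)"
proof -
  have c1: "of_int \<lfloor>x\<rfloor> \<le> x" "x < of_int \<lfloor>x\<rfloor> + 1" using floor_correct[of x] by auto
  have a: "2 * \<lfloor>x\<rfloor> \<le> \<lfloor>2*x\<rfloor>" unfolding le_floor_iff using c1 by simp
  have b: "\<lfloor>2*x\<rfloor> < 2 * \<lfloor>x\<rfloor> + 2" unfolding floor_less_iff using c1 by simp linarith
  show ?thesis using a b by presburger
qed

lemma idx_floor:
  assumes "idx k y = idx k (z :: real^'d::finite)"
    and "\<forall>i. 0 \<le> y$i \<and> y$i < 1" "\<forall>i. 0 \<le> z$i \<and> z$i < 1"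
  shows "\<lfloor>2^k * y$i\<rfloor> = \<lfloor>2^k * z$i\<rfloor>"
  using assms(1)
proof (induction k arbitrary: i)
  case 0
  have "\<lfloor>y$i\<rfloor> = 0" "\<lfloor>z$i\<rfloor> = 0" using assms(2,3) by (auto simp: floor_eq_iff)
  then show ?case by simp
next
  case (Suc k)
  have e1: "idx k y = idx k z" using idx_Suc_div[of k y] idx_Suc_div[of k z] Suc.prems by metis
  have "(idx (Suc k) y) mod 2^CARD('d) = (idx (Suc k) z) mod 2^CARD('d)" using Suc.prems by simp
  then have "enc (\<lambda>i. odd \<lfloor>2^Suc k * y$i\<rfloor>) = enc (\<lambda>i. odd \<lfloor>2^Suc k * z$i\<rfloor>)"
    using enc_lt[where 'd='d] by simp
  then have par: "odd \<lfloor>2^Suc k * y$i\<rfloor> = odd \<lfloor>2^Suc k * z$i\<rfloor>" using enc_inj by metis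
  have ih: "\<lfloor>2^k * y$i\<rfloor> = \<lfloor>2^k * z$i\<rfloor>" using Suc.IH e1 by blast
  have "\<lfloor>2^Suc k * y$i\<rfloor> = \<lfloor>2 * (2^k * y$i)\<rfloor>" "\<lfloor>2^Suc k * z$i\<rfloor> = \<lfloor>2 * (2^k * z$i)\<rfloor>"
    by (simp_all add: mult.assoc)
  then show ?case using floor_double[of "2^k * y$i"] floor_double[of "2^k * z$i"] ih par by simp
qed

lemma floor_eq_close:
  assumes "\<lfloor>2^k * a\<rfloor> = \<lfloor>2^k * (b::real)\<rfloor>"
  shows "\<bar>a - b\<bar> < 1 / 2^k"
proof -
  have c1: "of_int \<lfloor>2^k * a\<rfloor> \<le> 2^k * a" "2^k * a < of_int \<lfloor>2^k * a\<rfloor> + 1"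
    using floor_correct[of "2^k * a"] by auto
  have c2: "of_int \<lfloor>2^k * b\<rfloor> \<le> 2^k * b" "2^k * b < of_int \<lfloor>2^k * b\<rfloor> + 1"
    using floor_correct[of "2^k * b"] by auto
  have e: "real_of_int \<lfloor>2^k * a\<rfloor> = real_of_int \<lfloor>2^k * b\<rfloor>" using assms by simp
  have "2^k * a - 2^k * b < 1" "2^k * b - 2^k * a < 1" using c1 c2 e by linarith+
  then have "2^k * (a - b) < 1" "2^k * (b - a) < 1" by (simp_all add: right_diff_distrib)
  then have "2^k * \<bar>a - b\<bar> < 1" by (cases "a \<le> b") (auto simp: abs_if)
  then show ?thesis by (simp add: field_simps)
qed

lemma measurable_idx[measurable]: "idx k \<in> measurable borel (count_space UNIV)"
proof (induction k)
  case 0 then show ?case by simp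
next
  case (Suc k)
  have par: "(\<lambda>y::real^'a. (\<lambda>i. odd \<lfloor>2^Suc k * y$i\<rfloor>)) \<in> measurable borel (count_space UNIV)"
    unfolding measurable_count_space_eq2_countable
  proof (safe)
    fix b :: "'a \<Rightarrow> bool"
    have "(\<lambda>y::real^'a. (\<lambda>i. odd \<lfloor>2^Suc k * y$i\<rfloor>)) -` {b} \<inter> space borel = (\<Inter>i. {y. odd \<lfloor>2^Suc k * y$i\<rfloor> = b i})"
      by auto
    also have "\<dots> \<in> sets borel" by measurable
    finally show "(\<lambda>y::real^'a. (\<lambda>i. odd \<lfloor>2^Suc k * y$i\<rfloor>)) -` {b} \<inter> space borel \<in> sets borel" .
  qed auto
  have "\<And>j. (\<lambda>y::real^'a. 2^CARD('a) * j + enc (\<lambda>i. odd \<lfloor>2^Suc k * y$i\<rfloor>)) \<in> measurable borel (count_space UNIV)"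
    using measurable_compose[OF par, of "\<lambda>b. 2^CARD('a) * _ + enc b" "count_space UNIV"] by simp
  from measurable_compose_countable[OF this Suc]
  show ?case by simp
qed

lemma (in finite_borel_measure) cdf_lt_measure:
  assumes noatom: "\<And>x. measure M {x} = 0" and t: "0 \<le> t" "t \<le> measure M (space M)"
  shows "measure M {x. cdf M x < t} = t"
proof (cases "t = 0")
  case True
  then have "{x. cdf M x < t} = {}" using cdf_nonneg by (auto simp: not_less)
  then show ?thesis using True by simp
next
  case False
  then have tpos: "t > 0" using t by simp
  define S where "S = {x. cdf M x < t}"
  have cont: "continuous_on UNIV (cdf M)"
    using isCont_cdf noatom by (simp add: continuous_on_eq_continuous_at)
  show ?thesis
  proof (cases "S = UNIV")
    case True
    have "measure M (space M) \<le> t"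
    proof (rule tendsto_le[OF _ tendsto_const cdf_lim_at_top])
      show "\<forall>\<^sub>F x in at_top. cdf M x \<le> t" using True unfolding S_def
        by (auto intro!: always_eventually less_imp_le)
    qed simp
    then have "t = measure M (space M)" using t by simp
    then show ?thesis using True borel_UNIV unfolding S_def by simp
  next
    case False
    then obtain b where "b \<notin> S" by auto
    then have b: "t \<le> cdf M b" unfolding S_def by simp
    have "\<forall>\<^sub>F x in at_bot. cdf M x < t"
      using order_tendstoD(2)[OF cdf_lim_at_bot tpos] .
    then obtain a where "a \<in> S" unfolding S_def eventually_at_bot_linorder by auto
    then have ne: "S \<noteq> {}" by auto
    have bdd: "bdd_above S"
    proof (rule bdd_aboveI[of _ b])
      fix x assume "x \<in> S"
      then show "x \<le> b" using b cdf_nondecreasing[of b x] unfolding S_def by force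
    qed
    define s where "s = Sup S"
    have opn: "open S" unfolding S_def by (rule open_Collect_less[OF cont continuous_on_const])
    have Seq: "S = {..<s}"
    proof safe
      fix x assume "x \<in> S"
      then obtain e where e: "e > 0" "ball x e \<subseteq> S" using opn open_contains_ball by blast
      then have "x + e/2 \<in> S" by (auto simp: dist_real_def)
      then have "x + e/2 \<le> s" unfolding s_def using bdd by (rule cSup_upper)
      then show "x < s" using e by simp
    next
      fix x assume "x < s"
      then obtain y where "y \<in> S" "x < y" unfolding s_def using less_cSup_iff[OF ne bdd] by auto
      then show "x \<in> S" unfolding S_def using cdf_nondecreasing[of x y] by auto
    qed
    have "s \<notin> S" using Seq by simp
    then have ge: "t \<le> cdf M s" unfolding S_def by simp
    have "s \<in> closure S" unfolding s_def using closure_contains_Sup[OF ne bdd] .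
    moreover have "closure S \<subseteq> {x. cdf M x \<le> t}"
      by (rule closure_minimal) (auto simp: S_def intro: closed_Collect_le[OF cont continuous_on_const])
    ultimately have le: "cdf M s \<le> t" by auto
    have "measure M {..<s} = measure M ({..s} - {s})" by (intro arg_cong[where f="measure M"]) auto
    also have "\<dots> = measure M {..s} - measure M {s}"
      by (rule finite_measure_Diff) auto
    also have "\<dots> = cdf M s" using noatom by (simp add: cdf_def)
    finally show ?thesis using Seq ge le unfolding S_def by simp
  qed
qed

lemma diag_conv:
  fixes x :: "nat \<Rightarrow> nat \<Rightarrow> 'a::heine_borel"
  assumes bnd: "\<And>j. bounded (range (x j))"
  shows "\<exists>r. strict_mono r \<and> (\<forall>j. convergent (\<lambda>n. x j (r n)))"
proof -
  let ?P = "\<lambda>j s. convergent (\<lambda>n. x j (s n))"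
  interpret nat: subseqs ?P
  proof (unfold subseqs_def, intro allI impI)
    fix j :: nat and s :: "nat \<Rightarrow> nat" assume s: "strict_mono s"
    have "bounded (range (\<lambda>n. x j (s n)))"
      using bnd[of j] by (rule bounded_subset) auto
    then obtain l r where "strict_mono r" "((\<lambda>n. x j (s n)) \<circ> r) \<longlonglongrightarrow> l"
      using bounded_imp_convergent_subsequence by blast
    then show "\<exists>r'. strict_mono r' \<and> ?P j (s \<circ> r')"
      by (auto simp: convergent_def o_def)
  qed
  define d where "d = nat.diagseq"
  have "strict_mono d" unfolding d_def using nat.subseq_diagseq by auto
  moreover have "?P j d" for j
  proof -
    have "?P j (d \<circ> ((+) (Suc j)))"
      unfolding d_def
    proof (rule nat.diagseq_holds)
      fix r s n assume "strict_mono (r::nat\<Rightarrow>nat)" "?P n s"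
      then show "?P n (s \<circ> r)"
        using convergent_subseq_convergent[of "\<lambda>i. x n (s i)" r] by (simp add: o_def)
    qed
    then have "convergent (\<lambda>n. x j (d (n + Suc j)))" by (simp add: o_def add.commute)
    then obtain L where "(\<lambda>n. x j (d (n + Suc j))) \<longlonglongrightarrow> L"
      by (auto simp: convergent_def)
    then have "(\<lambda>n. x j (d n)) \<longlonglongrightarrow> L" by (rule LIMSEQ_offset)
    then show ?thesis by (auto simp: convergent_def)
  qed
  ultimately show ?thesis by blast
qed

definition box01 :: "(real^'d::finite) set" where
  "box01 = {y. \<forall>i. 0 < y$i \<and> y$i < 1}"

definition boxd :: "real \<Rightarrow> (real^'d::finite) set" where
  "boxd \<delta> = {y. \<forall>i. \<delta> \<le> y$i \<and> y$i \<le> 1 - \<delta>}"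

lemma measure_nat_preimage:
  assumes "finite_measure M" and f: "f \<in> measurable M (count_space UNIV)" and S: "finite (S :: nat set)"
  shows "measure M {x\<in>space M. f x \<in> S} = (\<Sum>m\<in>S. measure M {x\<in>space M. f x = m})"
proof -
  interpret finite_measure M by fact
  have "{x\<in>space M. f x \<in> S} = (\<Union>m\<in>S. {x\<in>space M. f x = m})" by auto
  also have "measure M \<dots> = (\<Sum>m\<in>S. measure M {x\<in>space M. f x = m})"
  proof (rule finite_measure_finite_Union[OF S])
    show "(\<lambda>m. {x \<in> space M. f x = m}) ` S \<subseteq> sets M"
    proof clarify
      fix m assume "m \<in> S"
      have "f -` {m} \<inter> space M \<in> sets M" using measurable_sets[OF f] by simp
      moreover have "f -` {m} \<inter> space M = {x \<in> space M. f x = m}" by auto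
      ultimately show "{x \<in> space M. f x = m} \<in> sets M" by simp
    qed
    show "disjoint_family_on (\<lambda>m. {x \<in> space M. f x = m}) S"
      by (auto simp: disjoint_family_on_def)
  qed
  finally show ?thesis .
qed

locale core =
  fixes Mc :: "real measure" and Y :: "nat \<Rightarrow> real \<Rightarrow> real^'d::finite"
  assumes fin: "finite_borel_measure Mc"
    and noatom: "\<And>x. measure Mc {x} = 0"
    and Ymeas[measurable]: "\<And>n. Y n \<in> borel_measurable borel"
    and Ybox: "\<And>n x. Y n x \<in> box01"
    and tight: "\<And>\<epsilon>. \<epsilon> > 0 \<Longrightarrow> \<exists>\<delta>>0. \<forall>n. measure Mc {x. Y n x \<notin> boxd \<delta>} < \<epsilon>"
begin

interpretation M: finite_borel_measure Mc by (rule fin)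

lemma spaceM[simp]: "space Mc = UNIV" by (rule M.borel_UNIV)
lemma measM[measurable_cong]: "sets Mc = sets borel" by (rule M.M_is_borel)


definition "c = measure Mc UNIV"
definition q :: "nat \<Rightarrow> nat \<Rightarrow> nat \<Rightarrow> real" where
  "q n k m = measure Mc {x. idx k (Y n x) = m}"

lemma q_nonneg: "0 \<le> q n k m" unfolding q_def by simp

lemma q_le: "q n k m \<le> c" unfolding q_def c_def using M.bounded_measure by simp

lemma q00: "q n 0 0 = c" unfolding q_def c_def by simp

lemma q_split:
  assumes "k \<le> j"
  shows "q n k m = (\<Sum>i<2^(CARD('d)*(j-k)). q n j (2^(CARD('d)*(j-k)) * m + i))"
proof -
  let ?Q = "2^(CARD('d)*(j-k)) :: nat"
  have Qpos: "?Q > 0" by simp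
  have iff: "(a div ?Q = m) \<longleftrightarrow> a \<in> (\<lambda>i. ?Q*m+i) ` {..<?Q}" for a
  proof
    assume "a div ?Q = m"
    then show "a \<in> (\<lambda>i. ?Q*m+i) ` {..<?Q}"
      using Qpos by (intro image_eqI[of _ _ "a mod ?Q"]) (auto simp: mult.commute)
  next
    assume "a \<in> (\<lambda>i. ?Q*m+i) ` {..<?Q}"
    then show "a div ?Q = m" by auto
  qed
  have "{x. idx k (Y n x) = m} = {x\<in>space Mc. idx j (Y n x) \<in> (\<lambda>i. ?Q*m+i) ` {..<?Q}}"
    by (simp only: iff[symmetric] idx_div[OF assms] spaceM) auto
  then have "q n k m = measure Mc {x\<in>space Mc. idx j (Y n x) \<in> (\<lambda>i. ?Q*m+i) ` {..<?Q}}"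
    unfolding q_def by simp
  also have "\<dots> = (\<Sum>m'\<in>(\<lambda>i. ?Q*m+i) ` {..<?Q}. measure Mc {x\<in>space Mc. idx j (Y n x) = m'})"
    by (rule measure_nat_preimage) (auto intro: M.finite_measure_axioms)
  also have "\<dots> = (\<Sum>i<?Q. q n j (?Q * m + i))"
    by (subst sum.reindex) (auto simp: inj_on_def q_def)
  finally show ?thesis .
qed

lemma q_sum: "(\<Sum>m<2^(CARD('d)*k). q n k m) = c"
  using q_split[of 0 k n 0] q00 by simp

end

lemma ex_pow2_less: "0 < (t::real) \<Longrightarrow> \<exists>k. 1/2^k < t"
  using real_arch_pow_inv[of t "1/2"] by (auto simp: power_one_over)

lemma sum_lessThan_add: "sum f {..<a + b} = sum f {..<a} + (\<Sum>i<b. f (a + i))" for a b :: nat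
  by (induction b) (auto simp: add.assoc[symmetric])

context core
begin

definition rr :: "nat \<Rightarrow> nat" where
  "rr = (SOME r. strict_mono r \<and> (\<forall>k m. convergent (\<lambda>n. q (r n) k m)))"

lemma rr: "strict_mono rr" "\<And>k m. convergent (\<lambda>n. q (rr n) k m)"
proof -
  let ?x = "\<lambda>j n. q n (fst (prod_decode j)) (snd (prod_decode j))"
  have "bounded (range (?x j))" for j
    using q_nonneg q_le by (intro boundedI[of _ c]) (auto simp: abs_of_nonneg)
  then obtain r where r: "strict_mono r" "\<And>j. convergent (\<lambda>n. ?x j (r n))"
    using diag_conv[of ?x] by blast
  have "convergent (\<lambda>n. q (r n) k m)" for k m
    using r(2)[of "prod_encode (k, m)"] by simp
  then have "\<exists>r. strict_mono r \<and> (\<forall>k m. convergent (\<lambda>n. q (r n) k m))" using r(1) by blast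
  then have "strict_mono rr \<and> (\<forall>k m. convergent (\<lambda>n. q (rr n) k m))"
    unfolding rr_def by (rule someI_ex)
  then show "strict_mono rr" "\<And>k m. convergent (\<lambda>n. q (rr n) k m)" by auto
qed

definition p :: "nat \<Rightarrow> nat \<Rightarrow> real" where "p k m = lim (\<lambda>n. q (rr n) k m)"

lemma q_tendsto: "(\<lambda>n. q (rr n) k m) \<longlonglongrightarrow> p k m"
  unfolding p_def using rr(2) convergent_LIMSEQ_iff by blast

lemma p_nonneg: "0 \<le> p k m"
  by (rule LIMSEQ_le_const[OF q_tendsto]) (auto intro: q_nonneg)

lemma p_split:
  assumes "k \<le> j"
  shows "p k m = (\<Sum>i<2^(CARD('d)*(j-k)). p j (2^(CARD('d)*(j-k)) * m + i))"
proof -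
  have "(\<lambda>n. q (rr n) k m) \<longlonglongrightarrow> (\<Sum>i<2^(CARD('d)*(j-k)). p j (2^(CARD('d)*(j-k)) * m + i))"
    unfolding q_split[OF assms] by (intro tendsto_sum q_tendsto)
  then show ?thesis using q_tendsto LIMSEQ_unique by blast
qed

lemma p00: "p 0 0 = c"
  using q_tendsto[of 0 0] LIMSEQ_unique by (auto simp: q00)

definition P :: "nat \<Rightarrow> nat \<Rightarrow> real" where "P k m = (\<Sum>i<m. p k i)"

lemma P_Suc: "P k (Suc m) = P k m + p k m" unfolding P_def by simp

lemma P_0[simp]: "P k 0 = 0" unfolding P_def by simp

lemma P_mono: "m \<le> m' \<Longrightarrow> P k m \<le> P k m'"
  unfolding P_def by (rule sum_mono2) (auto intro: p_nonneg)

lemma P_nest: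
  assumes "k \<le> j"
  shows "P j (2^(CARD('d)*(j-k)) * m) = P k m"
proof (induction m)
  case 0 then show ?case by simp
next
  case (Suc m)
  let ?Q = "2^(CARD('d)*(j-k)) :: nat"
  have "P j (?Q * Suc m) = P j (?Q * m + ?Q)" by (simp add: add.commute)
  also have "\<dots> = P j (?Q * m) + (\<Sum>i<?Q. p j (?Q * m + i))"
    unfolding P_def by (rule sum_lessThan_add)
  also have "\<dots> = P k m + p k m" using Suc p_split[OF assms, of m] by simp
  finally show ?case by (simp add: P_Suc)
qed

lemma P_N: "P k (2^(CARD('d)*k)) = c"
  using P_nest[of 0 k 1] by (simp add: P_def p00)

lemma P_le_c: "m \<le> 2^(CARD('d)*k) \<Longrightarrow> P k m \<le> c"
  using P_mono[of m "2^(CARD('d)*k)" k] P_N by simp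

lemma P_nonneg: "0 \<le> P k m" using P_mono[of 0 m k] by simp

definition mk :: "nat \<Rightarrow> real \<Rightarrow> nat" where "mk k u = (LEAST m. u < P k (Suc m))"

lemma mk_eq:
  assumes "P k m \<le> u" "u < P k (Suc m)"
  shows "mk k u = m"
  unfolding mk_def
proof (rule Least_equality)
  show "u < P k (Suc m)" by fact
  fix m' assume "u < P k (Suc m')"
  show "m \<le> m'"
  proof (rule ccontr)
    assume "\<not> m \<le> m'"
    then have "P k (Suc m') \<le> P k m" by (intro P_mono) simp
    then show False using assms \<open>u < P k (Suc m')\<close> by simp
  qed
qed

lemma mk_props:
  assumes "0 \<le> u" "u < c"
  shows "mk k u < 2^(CARD('d)*k)" "P k (mk k u) \<le> u" "u < P k (Suc (mk k u))"
proof -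
  let ?N = "2^(CARD('d)*k) :: nat"
  have ex: "u < P k (Suc (?N - 1))" using assms P_N[of k] by simp
  show u: "u < P k (Suc (mk k u))" unfolding mk_def by (rule LeastI[of "\<lambda>m. u < P k (Suc m)" "?N - 1", OF ex])
  have "mk k u \<le> ?N - 1" unfolding mk_def by (rule Least_le[of "\<lambda>m. u < P k (Suc m)" "?N - 1", OF ex])
  moreover have "0 < ?N" by simp
  ultimately show "mk k u < ?N" by arith
  show "P k (mk k u) \<le> u"
  proof (cases "mk k u")
    case 0 then show ?thesis using assms by simp
  next
    case (Suc m)
    then have "\<not> u < P k (Suc m)" unfolding mk_def using not_less_Least[of m "\<lambda>m. u < P k (Suc m)"] by simp
    then show ?thesis using Suc by simp
  qed
qed

lemma mk_nest:
  assumes "k \<le> j" "0 \<le> u" "u < c"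
  shows "mk j u div 2^(CARD('d)*(j-k)) = mk k u"
proof -
  let ?Q = "2^(CARD('d)*(j-k)) :: nat"
  define m where "m = mk k u"
  define m' where "m' = mk j u"
  note a = mk_props[OF assms(2,3), of k, folded m_def]
  note b = mk_props[OF assms(2,3), of j, folded m'_def]
  have "?Q * m \<le> m'"
  proof (rule ccontr)
    assume "\<not> ?Q * m \<le> m'"
    then have "P j (Suc m') \<le> P j (?Q * m)" by (intro P_mono) simp
    then show False using P_nest[OF assms(1), of m] a b by simp
  qed
  moreover have "m' < ?Q * Suc m"
  proof (rule ccontr)
    assume "\<not> m' < ?Q * Suc m"
    then have "P j (?Q * Suc m) \<le> P j m'" by (intro P_mono) simp
    then show False using P_nest[OF assms(1), of "Suc m"] a b by simp
  qed
  ultimately show ?thesis unfolding m_def m'_def by (rule div_nat_eqI)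
qed

lemma mk_pos:
  assumes "0 \<le> u" "u < c"
  shows "0 < p k (mk k u)"
  using mk_props[OF assms, of k] P_Suc[of k "mk k u"] by simp

lemma p_pos_ex:
  assumes "0 < p k m" shows "\<exists>y\<in>(box01::(real^'d) set). idx k y = m"
proof (rule ccontr)
  assume "\<not> ?thesis"
  then have "{x. idx k (Y n x) = m} = {}" for n using Ybox[of n] by blast
  then have "q n k m = 0" for n unfolding q_def by simp
  then have "p k m = 0" unfolding p_def by simp
  then show False using assms by simp
qed

definition rep :: "nat \<Rightarrow> nat \<Rightarrow> real^'d" where
  "rep k m = (SOME y. y \<in> box01 \<and> idx k y = m)"

lemma rep_props:
  assumes "\<exists>y\<in>(box01::(real^'d) set). idx k y = m"
  shows "rep k m \<in> box01" "idx k (rep k m) = m"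
proof -
  have ex: "\<exists>y::real^'d. y \<in> box01 \<and> idx k y = m" using assms by blast
  have "rep k m \<in> box01 \<and> idx k (rep k m) = m"
    unfolding rep_def by (rule someI_ex[OF ex])
  then show "rep k m \<in> box01" "idx k (rep k m) = m" by auto
qed

definition Z :: "nat \<Rightarrow> real \<Rightarrow> real^'d" where "Z k u = rep k (mk k u)"

lemma Z_props:
  assumes "0 \<le> u" "u < c"
  shows "Z k u \<in> box01" "idx k (Z k u) = mk k u"
  unfolding Z_def using rep_props[OF p_pos_ex[OF mk_pos[OF assms]]] by auto

lemma box01_half: "y \<in> box01 \<Longrightarrow> \<forall>i. 0 \<le> y$i \<and> y$i < 1"
  unfolding box01_def by (simp add: order.strict_implies_order)

lemma Z_close:
  assumes "0 \<le> u" "u < c" "k \<le> j"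
  shows "\<bar>Z j u $ i - Z k u $ i\<bar> < 1/2^k"
proof (rule floor_eq_close, rule idx_floor)
  have "idx k (Z j u) = idx j (Z j u) div 2^(CARD('d)*(j-k))" by (rule idx_div[OF assms(3), symmetric])
  also have "\<dots> = mk k u" using Z_props[OF assms(1,2), of j] mk_nest[OF assms(3,1,2)] by simp
  also have "\<dots> = idx k (Z k u)" using Z_props[OF assms(1,2), of k] by simp
  finally show "idx k (Z j u) = idx k (Z k u)" .
  show "\<forall>i. 0 \<le> Z j u $ i \<and> Z j u $ i < 1" "\<forall>i. 0 \<le> Z k u $ i \<and> Z k u $ i < 1"
    using box01_half[OF Z_props(1)[OF assms(1,2), of j]] box01_half[OF Z_props(1)[OF assms(1,2), of k]] by auto
qed

lemma dist_le_card:
  fixes e :: real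
  assumes "\<And>i. \<bar>x$i - y$i\<bar> \<le> e"
  shows "dist x (y :: real^'d) \<le> real CARD('d) * e"
proof -
  have "dist x y = norm (x - y)" by (simp add: dist_norm)
  also have "\<dots> \<le> (\<Sum>i\<in>UNIV. \<bar>(x - y)$i\<bar>)" by (rule norm_le_l1_cart)
  also have "\<dots> \<le> (\<Sum>i\<in>(UNIV::'d set). e)" using assms by (intro sum_mono) simp
  finally show ?thesis by simp
qed

definition Phi :: "real \<Rightarrow> real^'d" where "Phi u = lim (\<lambda>k. Z k u)"

lemma Z_tendsto:
  assumes "0 \<le> u" "u < c"
  shows "(\<lambda>k. Z k u) \<longlonglongrightarrow> Phi u"
proof -
  have "Cauchy (\<lambda>k. Z k u)"
  proof (rule metric_CauchyI)
    fix e :: real assume e: "0 < e"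
    obtain M where M: "1/2^M < e / (2 * CARD('d))"
      using ex_pow2_less[of "e / (2 * CARD('d))"] e by auto
    have cl: "dist (Z n u) (Z M u) \<le> CARD('d) * (1/2^M)" if "M \<le> n" for n
      using Z_close[OF assms that] by (intro dist_le_card less_imp_le) auto
    have "CARD('d) * (1/2^M) < CARD('d) * (e / (2 * CARD('d)))"
      using M by (intro mult_strict_left_mono) auto
    also have "\<dots> = e/2" by simp
    finally have h: "dist (Z n u) (Z M u) < e/2" if "M \<le> n" for n using cl[OF that] by linarith
    have "dist (Z m u) (Z n u) < e" if "M \<le> m" "M \<le> n" for m n
      using dist_triangle2[of "Z m u" "Z n u" "Z M u"] h[OF that(1)] h[OF that(2)] by linarith
    then show "\<exists>M. \<forall>m\<ge>M. \<forall>n\<ge>M. dist (Z m u) (Z n u) < e" by blast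
  qed
  then show ?thesis unfolding Phi_def using Cauchy_convergent convergent_LIMSEQ_iff by blast
qed

lemma Phi_close:
  assumes "0 \<le> u" "u < c"
  shows "\<bar>Phi u $ i - Z k u $ i\<bar> \<le> 1/2^k"
proof -
  have "(\<lambda>j. \<bar>Z j u $ i - Z k u $ i\<bar>) \<longlonglongrightarrow> \<bar>Phi u $ i - Z k u $ i\<bar>"
    by (intro tendsto_intros tendsto_vec_nth Z_tendsto[OF assms])
  moreover have "\<forall>\<^sub>F j in sequentially. \<bar>Z j u $ i - Z k u $ i\<bar> \<le> 1/2^k"
  proof -
    have "\<forall>j\<ge>k. \<bar>Z j u $ i - Z k u $ i\<bar> \<le> 1/2^k"
      using Z_close[OF assms] less_imp_le by blast
    then show ?thesis unfolding eventually_sequentially by blast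
  qed
  ultimately show ?thesis by (rule tendsto_upperbound) simp
qed

end

lemma tendsto_from_eps:
  fixes a :: "nat \<Rightarrow> real"
  assumes K: "K > 0" and h: "\<And>\<epsilon>. \<epsilon> > 0 \<Longrightarrow> \<exists>N. \<forall>n\<ge>N. \<bar>a n - b\<bar> \<le> K * \<epsilon>"
  shows "a \<longlonglongrightarrow> b"
proof (rule LIMSEQ_I)
  fix r :: real assume r: "0 < r"
  obtain N where N: "\<forall>n\<ge>N. \<bar>a n - b\<bar> \<le> K * (r / (2*K))" using h[of "r/(2*K)"] r K by auto
  have "K * (r / (2*K)) = r/2" using K by simp
  then have "\<forall>n\<ge>N. norm (a n - b) < r" using N r by auto
  then show "\<exists>no. \<forall>n\<ge>no. norm (a n - b) < r" by blast
qed

lemma boxd_cbox: "boxd d = cbox (\<chi> i. d) (\<chi> i. 1 - d :: real^'d::finite)"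
  unfolding boxd_def by (auto simp: mem_box_cart)

lemma integral_step:
  fixes \<phi> :: "'a \<Rightarrow> nat" and a :: "nat \<Rightarrow> real"
  assumes "finite_measure M" and \<phi>: "\<phi> \<in> measurable M (count_space UNIV)" and S: "finite S"
  shows "(\<integral>x. (if \<phi> x \<in> S then a (\<phi> x) else 0) \<partial>M) = (\<Sum>m\<in>S. a m * measure M {x\<in>space M. \<phi> x = m})"
proof -
  interpret finite_measure M by fact
  have sets: "{x\<in>space M. \<phi> x = m} \<in> sets M" for m
  proof -
    have "\<phi> -` {m} \<inter> space M \<in> sets M" using measurable_sets[OF \<phi>] by simp
    moreover have "\<phi> -` {m} \<inter> space M = {x \<in> space M. \<phi> x = m}" by auto
    ultimately show ?thesis by simp
  qed
  have eq: "(if \<phi> x \<in> S then a (\<phi> x) else 0) = (\<Sum>m\<in>S. a m * indicator {x\<in>space M. \<phi> x = m} x)"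
    if "x \<in> space M" for x
  proof -
    have "(\<Sum>m\<in>S. a m * indicator {x\<in>space M. \<phi> x = m} x) = (\<Sum>m\<in>S. if \<phi> x = m then a m else 0)"
      using that by (intro sum.cong) (auto simp: indicator_def)
    also have "\<dots> = (if \<phi> x \<in> S then a (\<phi> x) else 0)"
      using S by (simp add: sum.delta)
    finally show ?thesis by simp
  qed
  have "(\<integral>x. (if \<phi> x \<in> S then a (\<phi> x) else 0) \<partial>M) = (\<integral>x. (\<Sum>m\<in>S. a m * indicator {x\<in>space M. \<phi> x = m} x) \<partial>M)"
    using eq by (intro Bochner_Integration.integral_cong) auto
  also have "\<dots> = (\<Sum>m\<in>S. (\<integral>x. a m * indicator {x\<in>space M. \<phi> x = m} x \<partial>M))"
    by (rule Bochner_Integration.integral_sum[where I=S and f="\<lambda>m x. a m * indicator {x\<in>space M. \<phi> x = m} x"])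
       (auto intro!: integrable_real_indicator sets simp: emeasure_eq_measure)
  also have "\<dots> = (\<Sum>m\<in>S. a m * measure M {x\<in>space M. \<phi> x = m})"
    using sets by (simp add: Int_absorb2 sets.sets_into_space)
  finally show ?thesis .
qed

context core
begin

interpretation M: finite_borel_measure Mc by (rule fin)

abbreviation "G \<equiv> cdf Mc"

lemma G_meas[measurable]: "G \<in> borel_measurable borel"
  by (rule borel_measurable_mono) (auto simp: mono_def M.cdf_nondecreasing)

lemma mkG_meas[measurable]: "(\<lambda>x. mk k (G x)) \<in> measurable borel (count_space UNIV)"
  unfolding mk_def by measurable

definition Psi :: "real \<Rightarrow> real^'d" where "Psi x = Phi (G x)"

lemma Psi_meas[measurable]: "Psi \<in> borel_measurable borel"
proof -
  have "(\<lambda>x. Z k (G x)) \<in> borel_measurable borel" for k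
    unfolding Z_def by (rule measurable_compose[OF mkG_meas]) simp
  then have "(\<lambda>x. lim (\<lambda>k. Z k (G x))) \<in> borel_measurable borel"
    by (rule borel_measurable_lim_metric)
  then show ?thesis unfolding Psi_def Phi_def by simp
qed

lemma G_lt:
  assumes "0 \<le> t" "t \<le> c"
  shows "measure Mc {x. G x < t} = t"
  using M.cdf_lt_measure[OF noatom assms(1)] assms(2) by (simp add: c_def)

lemma Gc_null: "measure Mc {x. c \<le> G x} = 0"
proof -
  have "{x. c \<le> G x} = UNIV - {x. G x < c}" by auto
  then have "measure Mc {x. c \<le> G x} = measure Mc UNIV - measure Mc {x. G x < c}"
    using M.finite_measure_Diff[of UNIV "{x. G x < c}"] by simp
  also have "\<dots> = 0" using G_lt[of c] by (simp add: c_def)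
  finally show ?thesis .
qed

lemma c_nonneg: "0 \<le> c" unfolding c_def by simp

lemma D_meas:
  assumes m: "m < 2^(CARD('d)*k)"
  shows "measure Mc {x. G x < c \<and> mk k (G x) = m} = p k m"
proof -
  have le: "P k (Suc m) \<le> c" using m by (intro P_le_c) simp
  have iff: "(G x < c \<and> mk k (G x) = m) \<longleftrightarrow> (G x < P k (Suc m) \<and> \<not> G x < P k m)" for x
  proof
    assume a: "G x < c \<and> mk k (G x) = m"
    note mp = mk_props[OF M.cdf_nonneg conjunct1[OF a], of k]
    show "G x < P k (Suc m) \<and> \<not> G x < P k m" using mp a by simp
  next
    assume a: "G x < P k (Suc m) \<and> \<not> G x < P k m"
    then show "G x < c \<and> mk k (G x) = m" using le by (auto intro: mk_eq)
  qed
  have "{x. G x < c \<and> mk k (G x) = m} = {x. G x < P k (Suc m)} - {x. G x < P k m}"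
    using iff by auto
  then have "measure Mc {x. G x < c \<and> mk k (G x) = m} = measure Mc {x. G x < P k (Suc m)} - measure Mc {x. G x < P k m}"
    using P_mono[of m "Suc m" k]
    by (simp add: M.finite_measure_Diff subset_eq)
  also have "\<dots> = P k (Suc m) - P k m"
    using G_lt P_nonneg le P_mono[of m "Suc m" k] by simp
  also have "\<dots> = p k m" by (simp add: P_Suc)
  finally show ?thesis .
qed

definition phiG :: "nat \<Rightarrow> real \<Rightarrow> nat" where
  "phiG k x = (if G x < c then mk k (G x) else 2^(CARD('d)*k))"

lemma phiG_meas[measurable]: "phiG k \<in> measurable borel (count_space UNIV)"
  unfolding phiG_def by measurable

lemma phiG_meas': "phiG k \<in> measurable Mc (count_space UNIV)"
  using phiG_meas by (simp add: measurable_cong_sets[OF measM refl])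

lemma phiG_eq: "m < 2^(CARD('d)*k) \<Longrightarrow> {x. phiG k x = m} = {x. G x < c \<and> mk k (G x) = m}"
  unfolding phiG_def by auto

lemma idxY_meas': "(\<lambda>x. idx k (Y n x)) \<in> measurable Mc (count_space UNIV)"
  by (simp add: measurable_cong_sets[OF measM refl])

lemma qsum_meas:
  assumes "S \<subseteq> {..<2^(CARD('d)*k)}"
  shows "measure Mc {x. idx k (Y n x) \<in> S} = (\<Sum>m\<in>S. q n k m)"
  using measure_nat_preimage[OF M.finite_measure_axioms idxY_meas', of S k n] assms
  by (auto simp: q_def intro: finite_subset)

lemma psum_meas:
  assumes "S \<subseteq> {..<2^(CARD('d)*k)}"
  shows "measure Mc {x. phiG k x \<in> S} = (\<Sum>m\<in>S. p k m)"
proof -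
  have fin: "finite S" using assms by (rule finite_subset) simp
  have "measure Mc {x. phiG k x \<in> S} = (\<Sum>m\<in>S. measure Mc {x. phiG k x = m})"
    using measure_nat_preimage[OF M.finite_measure_axioms phiG_meas' fin] by simp
  also have "\<dots> = (\<Sum>m\<in>S. p k m)"
    using assms by (intro sum.cong refl) (auto simp: phiG_eq D_meas)
  finally show ?thesis .
qed

end

context core
begin

interpretation M: finite_borel_measure Mc by (rule fin)

lemma meas_Mc: "f \<in> borel_measurable borel \<Longrightarrow> f \<in> borel_measurable Mc"
  by (simp add: measurable_cong_sets[OF measM refl])

lemma int_diff_bound:
  fixes f s :: "real \<Rightarrow> real"
  assumes fm: "f \<in> borel_measurable borel" and sm: "s \<in> borel_measurable borel"
    and fb: "\<And>x. \<bar>f x\<bar> \<le> B" and sb: "\<And>x. \<bar>s x\<bar> \<le> B"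
    and A: "A \<in> sets borel" and C: "0 \<le> C"
    and pt: "\<And>x. \<bar>f x - s x\<bar> \<le> e + C * indicator A x"
  shows "\<bar>(\<integral>x. f x \<partial>Mc) - (\<integral>x. s x \<partial>Mc)\<bar> \<le> e * c + C * measure Mc A"
proof -
  have fi: "integrable Mc f" using fb by (intro M.integrable_const_bound[of _ B] meas_Mc fm) auto
  have si: "integrable Mc s" using sb by (intro M.integrable_const_bound[of _ B] meas_Mc sm) auto
  have Ai: "integrable Mc (indicator A :: real \<Rightarrow> real)"
    using A by (intro integrable_real_indicator) (auto simp: measM M.emeasure_eq_measure)
  have bi: "integrable Mc (\<lambda>x. e + C * indicator A x)" using Ai by auto
  have "\<bar>(\<integral>x. f x \<partial>Mc) - (\<integral>x. s x \<partial>Mc)\<bar> = \<bar>\<integral>x. f x - s x \<partial>Mc\<bar>"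
    using fi si by simp
  also have "\<dots> \<le> (\<integral>x. e + C * indicator A x \<partial>Mc)"
    by (rule integral_abs_bound_integral) (use fi si bi pt in auto)
  also have "\<dots> = e * c + C * measure Mc A"
    using Ai A by (simp add: c_def measM)
  finally show ?thesis .
qed

lemma close_box:
  fixes y z w :: "real^'d"
  assumes d: "0 < \<delta>" and hk: "2 * (1/2^k) \<le> \<delta>/2"
    and y: "y \<in> boxd \<delta>" and ix: "idx k y = idx k z" and z: "z \<in> box01"
    and w: "\<And>i. \<bar>w$i - z$i\<bar> \<le> 1/2^k"
  shows "w \<in> boxd (\<delta>/2)"
proof -
  have yb: "y \<in> box01" using y d unfolding boxd_def box01_def
    by (auto; smt (verit))
  have yz: "\<bar>y$i - z$i\<bar> < 1/2^k" for i
    by (rule floor_eq_close[OF idx_floor[OF ix box01_half[OF yb] box01_half[OF z]]])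
  have "\<delta>/2 \<le> w$i \<and> w$i \<le> 1 - \<delta>/2" for i
  proof -
    have "\<delta> \<le> y$i" "y$i \<le> 1 - \<delta>" using y unfolding boxd_def by auto
    moreover have "\<bar>w$i - z$i\<bar> \<le> 1/2^k" by (rule w)
    moreover note yz[of i]
    ultimately show ?thesis using hk by (auto simp: abs_le_iff abs_less_iff)
  qed
  then show ?thesis unfolding boxd_def by auto
qed

lemma rep_meas[measurable]: "rep k \<in> measurable (count_space UNIV) borel"
  by simp

lemma core_conv:
  fixes g :: "real^'d \<Rightarrow> real"
  assumes gc: "continuous_on box01 g" and gb: "\<And>y. \<bar>g y\<bar> \<le> B"
    and gm[measurable]: "g \<in> borel_measurable borel"
  shows "(\<lambda>n. \<integral>x. g (Y (rr n) x) \<partial>Mc) \<longlonglongrightarrow> (\<integral>x. g (Psi x) \<partial>Mc)"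
proof (rule tendsto_from_eps[of "2*c + 4*B + 1"])
  have B0: "0 \<le> B" using gb[of 0] by linarith
  show "0 < 2*c + 4*B + 1" using c_nonneg B0 by linarith
  fix \<epsilon> :: real assume \<epsilon>: "\<epsilon> > 0"
  obtain \<delta> where \<delta>: "\<delta> > 0" "\<And>n. measure Mc {x. Y n x \<notin> boxd \<delta>} < \<epsilon>"
    using tight[OF \<epsilon>] by auto
  define B2 where "B2 = (boxd (\<delta>/2) :: (real^'d) set)"
  have B2sub: "B2 \<subseteq> box01"
  proof
    fix y assume "y \<in> B2"
    then have "\<delta>/2 \<le> y$i \<and> y$i \<le> 1 - \<delta>/2" for i unfolding B2_def boxd_def by auto
    then show "y \<in> box01" unfolding box01_def using \<delta>(1)
      by (smt (verit) field_sum_of_halves mem_Collect_eq)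
  qed
  have "compact B2" unfolding B2_def boxd_cbox by (rule compact_cbox)
  then have uc: "uniformly_continuous_on B2 g"
    by (intro compact_uniformly_continuous continuous_on_subset[OF gc B2sub])
  obtain \<eta> where \<eta>: "\<eta> > 0" "\<And>x x'. x \<in> B2 \<Longrightarrow> x' \<in> B2 \<Longrightarrow> dist x' x < \<eta> \<Longrightarrow> dist (g x') (g x) < \<epsilon>"
    using uniformly_continuous_onE[OF uc \<epsilon>] by blast
  have Dpos: "0 < real CARD('d)" by simp
  obtain k where k: "1/2^k < min (\<eta> / CARD('d)) (\<delta>/4)"
    using ex_pow2_less[of "min (\<eta> / CARD('d)) (\<delta>/4)"] \<eta>(1) \<delta>(1) Dpos by auto
  define h where "h = (1/2^k :: real)"
  have hD: "real CARD('d) * h < \<eta>"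
  proof -
    have "h < \<eta> / CARD('d)" using k unfolding h_def by simp
    then show ?thesis using Dpos by (simp add: field_simps)
  qed
  have h2: "2 * (1/2^k) \<le> \<delta>/2" using k by simp
  define N where "N = (2::nat)^(CARD('d)*k)"
  define Gd where "Gd = {m. \<exists>y\<in>boxd \<delta>. idx k (y::real^'d) = m}"
  define S where "S = Gd \<inter> {..<N}"
  have finS: "finite S" unfolding S_def by simp
  have SN: "S \<subseteq> {..<2^(CARD('d)*k)}" unfolding S_def N_def by auto
  define H where "H m = (if m \<in> S then g (rep k m) else 0)" for m
  have Hb: "\<bar>H m\<bar> \<le> B" for m unfolding H_def using gb B0 by auto
  have Hm: "H \<in> measurable (count_space UNIV) borel" by simp
  define sY where "sY n x = H (idx k (Y n x))" for n x
  define sP where "sP x = H (phiG k x)" for x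
  have sYm: "sY n \<in> borel_measurable borel" for n
    unfolding sY_def by (rule measurable_compose[OF _ Hm]) measurable
  have sPm: "sP \<in> borel_measurable borel"
    unfolding sP_def by (rule measurable_compose[OF phiG_meas Hm])
  have gclose: "\<bar>g w - g (rep k m)\<bar> < \<epsilon>"
    if m: "m \<in> Gd" and ex: "\<exists>y\<in>(box01::(real^'d) set). idx k y = m" and w: "\<And>i. \<bar>w$i - rep k m $ i\<bar> \<le> h"
    for w m
  proof -
    from m obtain y :: "real^'d" where y: "y \<in> boxd \<delta>" "idx k y = m" by (auto simp: Gd_def)
    note rp = rep_props[OF ex]
    have wB: "w \<in> B2" unfolding B2_def
      by (rule close_box[OF \<delta>(1) h2 y(1) _ rp(1)]) (use y(2) rp(2) w in \<open>auto simp: h_def\<close>)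
    have rB: "rep k m \<in> B2" unfolding B2_def
      by (rule close_box[OF \<delta>(1) h2 y(1) _ rp(1)]) (use y(2) rp(2) in \<open>auto simp: h_def\<close>)
    have "dist w (rep k m) \<le> CARD('d) * h" by (rule dist_le_card) (rule w)
    then have "dist w (rep k m) < \<eta>" using hD by linarith
    then have "dist (g w) (g (rep k m)) < \<epsilon>" using \<eta>(2)[OF rB wB] by simp
    then show ?thesis by (simp add: dist_real_def)
  qed
  have intY: "(\<integral>x. sY n x \<partial>Mc) = (\<Sum>m\<in>S. g (rep k m) * q n k m)" for n
  proof -
    have "(\<integral>x. sY n x \<partial>Mc) = (\<integral>x. (if idx k (Y n x) \<in> S then g (rep k (idx k (Y n x))) else 0) \<partial>Mc)"
      unfolding sY_def H_def by simp
    also have "\<dots> = (\<Sum>m\<in>S. g (rep k m) * measure Mc {x\<in>space Mc. idx k (Y n x) = m})"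
      by (rule integral_step[OF M.finite_measure_axioms idxY_meas' finS])
    finally show ?thesis by (simp add: q_def)
  qed
  have intP: "(\<integral>x. sP x \<partial>Mc) = (\<Sum>m\<in>S. g (rep k m) * p k m)"
  proof -
    have "(\<integral>x. sP x \<partial>Mc) = (\<integral>x. (if phiG k x \<in> S then g (rep k (phiG k x)) else 0) \<partial>Mc)"
      unfolding sP_def H_def by simp
    also have "\<dots> = (\<Sum>m\<in>S. g (rep k m) * measure Mc {x\<in>space Mc. phiG k x = m})"
      by (rule integral_step[OF M.finite_measure_axioms phiG_meas' finS])
    also have "\<dots> = (\<Sum>m\<in>S. g (rep k m) * p k m)"
      using SN by (intro sum.cong refl) (auto simp: phiG_eq D_meas)
    finally show ?thesis .
  qed
  have "(\<lambda>n. \<integral>x. sY (rr n) x \<partial>Mc) \<longlonglongrightarrow> (\<integral>x. sP x \<partial>Mc)"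
    unfolding intY intP by (intro tendsto_sum tendsto_mult tendsto_const q_tendsto)
  then obtain N1 where N1: "\<And>n. n \<ge> N1 \<Longrightarrow> \<bar>(\<integral>x. sY (rr n) x \<partial>Mc) - (\<integral>x. sP x \<partial>Mc)\<bar> < \<epsilon>"
    using LIMSEQ_D[OF _ \<epsilon>] by (metis real_norm_def)
  have pY: "\<bar>g (Y n x) - sY n x\<bar> \<le> \<epsilon> + 2*B * indicator {x. Y n x \<notin> boxd \<delta>} x" for n x
  proof (cases "Y n x \<in> boxd \<delta>")
    case True
    define m where "m = idx k (Y n x)"
    have mG: "m \<in> Gd" unfolding Gd_def m_def using True by blast
    have mS: "m \<in> S" unfolding S_def N_def using mG idx_lt[of k "Y n x"] m_def by auto
    have ex: "\<exists>y\<in>(box01::(real^'d) set). idx k y = m" using Ybox m_def by blast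
    note rp = rep_props[OF ex]
    have "\<bar>Y n x $ i - rep k m $ i\<bar> \<le> h" for i
      unfolding h_def
      by (rule less_imp_le, rule floor_eq_close, rule idx_floor)
         (use rp Ybox[of n x] box01_half m_def in auto)
    then have "\<bar>g (Y n x) - g (rep k m)\<bar> < \<epsilon>" by (intro gclose mG ex)
    then show ?thesis using mS True by (simp add: sY_def H_def m_def[symmetric])
  next
    case False
    have "\<bar>g (Y n x) - sY n x\<bar> \<le> 2*B" using gb[of "Y n x"] Hb[of "idx k (Y n x)"] unfolding sY_def by linarith
    then show ?thesis using False \<epsilon> by simp
  qed
  have pP: "\<bar>g (Psi x) - sP x\<bar> \<le> \<epsilon> + 2*B * indicator {x. phiG k x \<notin> S} x" for x
  proof (cases "phiG k x \<in> S")
    case True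
    have Gc: "G x < c"
    proof (rule ccontr)
      assume "\<not> G x < c"
      then have "phiG k x = N" unfolding phiG_def N_def by simp
      then show False using True unfolding S_def by simp
    qed
    define u where "u = G x"
    define m where "m = mk k u"
    have u: "0 \<le> u" "u < c" using Gc M.cdf_nonneg unfolding u_def by auto
    have phm: "phiG k x = m" unfolding phiG_def m_def u_def using Gc by simp
    note zp = Z_props[OF u, of k]
    have Zr: "Z k u = rep k m" unfolding Z_def m_def by simp
    have ex: "\<exists>y\<in>(box01::(real^'d) set). idx k y = m" using zp m_def by blast
    have mG: "m \<in> Gd" using True phm unfolding S_def by simp
    have "\<bar>Phi u $ i - rep k m $ i\<bar> \<le> h" for i using Phi_close[OF u, of i k] Zr by (simp add: h_def)
    then have "\<bar>g (Phi u) - g (rep k m)\<bar> < \<epsilon>" by (intro gclose mG ex)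
    then show ?thesis using True phm by (simp add: sP_def H_def Psi_def u_def)
  next
    case False
    have "\<bar>g (Psi x) - sP x\<bar> \<le> 2*B" using gb[of "Psi x"] Hb[of "phiG k x"] unfolding sP_def by linarith
    then show ?thesis using False \<epsilon> by simp
  qed
  have badY: "measure Mc {x. idx k (Y n x) \<in> {..<N} - S} \<le> measure Mc {x. Y n x \<notin> boxd \<delta>}" for n
  proof (rule M.finite_measure_mono)
    show "{x. idx k (Y n x) \<in> {..<N} - S} \<subseteq> {x. Y n x \<notin> boxd \<delta>}"
      unfolding S_def Gd_def by auto
    show "{x. Y n x \<notin> boxd \<delta>} \<in> sets Mc"
      unfolding measM boxd_cbox by measurable
  qed
  have sumq: "(\<Sum>m\<in>{..<N} - S. q n k m) < \<epsilon>" for n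
    using qsum_meas[of "{..<N} - S" k n] badY[of n] \<delta>(2)[of n] unfolding N_def by auto
  have sump: "(\<Sum>m\<in>{..<N} - S. p k m) \<le> \<epsilon>"
  proof (rule LIMSEQ_le_const2)
    show "(\<lambda>n. \<Sum>m\<in>{..<N} - S. q (rr n) k m) \<longlonglongrightarrow> (\<Sum>m\<in>{..<N} - S. p k m)"
      by (intro tendsto_sum q_tendsto)
    show "\<exists>N0. \<forall>n\<ge>N0. (\<Sum>m\<in>{..<N} - S. q (rr n) k m) \<le> \<epsilon>"
      using sumq less_imp_le by blast
  qed
  have badP: "measure Mc {x. phiG k x \<notin> S} \<le> \<epsilon>"
  proof -
    have sub: "{x. phiG k x \<notin> S} \<subseteq> {x. phiG k x \<in> {..<N} - S} \<union> {x. c \<le> G x}"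
      unfolding phiG_def N_def by (auto intro: mk_props(1)[OF M.cdf_nonneg])
    have "measure Mc {x. phiG k x \<notin> S} \<le> measure Mc ({x. phiG k x \<in> {..<N} - S} \<union> {x. c \<le> G x})"
      by (rule M.finite_measure_mono[OF sub]) (simp add: measM)
    also have "\<dots> \<le> measure Mc {x. phiG k x \<in> {..<N} - S} + measure Mc {x. c \<le> G x}"
      by (rule measure_Un_le) (simp_all add: measM)
    also have "\<dots> = (\<Sum>m\<in>{..<N} - S. p k m)"
      using psum_meas[of "{..<N} - S" k] Gc_null unfolding N_def by auto
    finally show ?thesis using sump by linarith
  qed
  have e1: "\<bar>(\<integral>x. g (Y n x) \<partial>Mc) - (\<integral>x. sY n x \<partial>Mc)\<bar> \<le> \<epsilon> * c + 2*B * \<epsilon>" for n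
  proof -
    have "\<bar>(\<integral>x. g (Y n x) \<partial>Mc) - (\<integral>x. sY n x \<partial>Mc)\<bar> \<le> \<epsilon> * c + 2*B * measure Mc {x. Y n x \<notin> boxd \<delta>}"
    proof (rule int_diff_bound)
      show "(\<lambda>x. g (Y n x)) \<in> borel_measurable borel" by measurable
      show "sY n \<in> borel_measurable borel" by (rule sYm)
      show "\<bar>g (Y n x)\<bar> \<le> B" for x by (rule gb)
      show "\<bar>sY n x\<bar> \<le> B" for x unfolding sY_def by (rule Hb)
      show "{x. Y n x \<notin> boxd \<delta>} \<in> sets borel" unfolding boxd_cbox by measurable
      show "0 \<le> 2*B" using B0 by simp
      show "\<bar>g (Y n x) - sY n x\<bar> \<le> \<epsilon> + 2*B * indicator {x. Y n x \<notin> boxd \<delta>} x" for x by (rule pY)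
    qed
    also have "\<dots> \<le> \<epsilon> * c + 2*B * \<epsilon>" using \<delta>(2)[of n] B0 by (intro add_left_mono mult_left_mono) auto
    finally show ?thesis .
  qed
  have e2: "\<bar>(\<integral>x. g (Psi x) \<partial>Mc) - (\<integral>x. sP x \<partial>Mc)\<bar> \<le> \<epsilon> * c + 2*B * \<epsilon>"
  proof -
    have "\<bar>(\<integral>x. g (Psi x) \<partial>Mc) - (\<integral>x. sP x \<partial>Mc)\<bar> \<le> \<epsilon> * c + 2*B * measure Mc {x. phiG k x \<notin> S}"
    proof (rule int_diff_bound)
      show "(\<lambda>x. g (Psi x)) \<in> borel_measurable borel" by measurable
      show "sP \<in> borel_measurable borel" by (rule sPm)
      show "\<bar>g (Psi x)\<bar> \<le> B" for x by (rule gb)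
      show "\<bar>sP x\<bar> \<le> B" for x unfolding sP_def by (rule Hb)
      show "{x. phiG k x \<notin> S} \<in> sets borel" by measurable
      show "0 \<le> 2*B" using B0 by simp
      show "\<bar>g (Psi x) - sP x\<bar> \<le> \<epsilon> + 2*B * indicator {x. phiG k x \<notin> S} x" for x by (rule pP)
    qed
    also have "\<dots> \<le> \<epsilon> * c + 2*B * \<epsilon>" using badP B0 by (intro add_left_mono mult_left_mono) auto
    finally show ?thesis .
  qed
  show "\<exists>N. \<forall>n\<ge>N. \<bar>(\<integral>x. g (Y (rr n) x) \<partial>Mc) - (\<integral>x. g (Psi x) \<partial>Mc)\<bar> \<le> (2*c + 4*B + 1) * \<epsilon>"
  proof (intro exI allI impI)
    fix n assume "n \<ge> N1"
    then have a: "\<bar>(\<integral>x. sY (rr n) x \<partial>Mc) - (\<integral>x. sP x \<partial>Mc)\<bar> < \<epsilon>" by (rule N1)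
    note b = e1[of "rr n"]
    show "\<bar>(\<integral>x. g (Y (rr n) x) \<partial>Mc) - (\<integral>x. g (Psi x) \<partial>Mc)\<bar> \<le> (2*c + 4*B + 1) * \<epsilon>"
      using a b e2 by (simp add: algebra_simps)
  qed
qed

end

definition sig :: "real \<Rightarrow> real" where "sig t = 1/2 + arctan t / pi"

lemma sig_bounds: "0 < sig t" "sig t < 1"
  using arctan_bounded[of t] pi_gt_zero unfolding sig_def by (auto simp: field_simps)

lemma sig_inv: "tan (pi * (sig t - 1/2)) = t"
  unfolding sig_def by (simp add: tan_arctan)

lemma sig_range:
  assumes "\<bar>t\<bar> \<le> R"
  shows "sig (-R) \<le> sig t" "sig t \<le> 1 - sig (-R)"
proof -
  have "arctan (-R) \<le> arctan t" "arctan t \<le> arctan R" using assms by (auto simp: arctan_le_iff)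
  then have "arctan (-R) / pi \<le> arctan t / pi" "arctan t / pi \<le> arctan R / pi"
    using pi_gt_zero by (auto intro: divide_right_mono)
  then show "sig (-R) \<le> sig t" "sig t \<le> 1 - sig (-R)"
    unfolding sig_def by (auto simp: arctan_minus)
qed

definition hvec :: "real^'d::finite \<Rightarrow> real^'d" where "hvec x = (\<chi> i. sig (x$i))"

definition hinv :: "real^'d::finite \<Rightarrow> real^'d" where
  "hinv y = (if y \<in> box01 then (\<chi> i. tan (pi * (y$i - 1/2))) else 0)"

lemma hvec_box: "hvec x \<in> box01"
  unfolding hvec_def box01_def using sig_bounds by auto

lemma hinv_hvec: "hinv (hvec x) = x"
  using hvec_box[of x] unfolding hinv_def by (simp add: hvec_def sig_inv vec_eq_iff)

lemma cont_sig: "continuous_on UNIV sig"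
  unfolding sig_def by (intro continuous_intros) auto

lemma hvec_meas[measurable]: "hvec \<in> borel_measurable borel"
proof -
  have "continuous_on UNIV (hvec :: real^'d \<Rightarrow> real^'d)"
    unfolding hvec_def
    by (intro continuous_on_vec_lambda continuous_on_compose2[OF cont_sig] continuous_intros) auto
  then show ?thesis by (rule borel_measurable_continuous_onI)
qed

lemma box01_eq: "box01 = box (0::real^'d::finite) 1"
  unfolding box01_def by (auto simp: mem_box_cart)

lemma box01_open: "open (box01 :: (real^'d::finite) set)"
  unfolding box01_eq by (rule open_box)

lemma hinv_cont: "continuous_on box01 (hinv :: real^'d::finite \<Rightarrow> real^'d)"
proof -
  have tc: "continuous_on {-(pi/2)<..<pi/2} tan"
    by (rule continuous_at_imp_continuous_on) (auto intro!: isCont_tan dest!: cos_gt_zero_pi)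
  have "continuous_on box01 (\<lambda>y::real^'d. \<chi> i. tan (pi * (y$i - 1/2)))"
  proof (intro continuous_on_vec_lambda continuous_on_compose2[OF tc] continuous_intros)
    fix i
    show "(\<lambda>y::real^'d. pi * (y$i - 1/2)) ` box01 \<subseteq> {-(pi/2)<..<pi/2}"
      unfolding box01_def using pi_gt_zero by (auto simp: field_simps)
  qed
  then show ?thesis
    by (rule continuous_on_cong[THEN iffD1, rotated 2]) (auto simp: hinv_def)
qed

lemma hinv_meas[measurable]: "(hinv :: real^'d::finite \<Rightarrow> real^'d) \<in> borel_measurable borel"
proof -
  have "(\<lambda>y::real^'d. if y \<in> box01 then (\<chi> i. tan (pi * (y$i - 1/2))) else 0) \<in> borel_measurable borel"
  proof (rule borel_measurable_continuous_on_if)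
    show "box01 \<in> sets borel" using box01_open by (rule borel_open)
    show "continuous_on box01 (\<lambda>y::real^'d. \<chi> i. tan (pi * (y$i - 1/2)))"
      using hinv_cont by (rule continuous_on_cong[THEN iffD1, rotated 2]) (auto simp: hinv_def)
  qed (rule continuous_on_const)
  then show ?thesis unfolding hinv_def[abs_def] .
qed

lemma hvec_boxd:
  assumes "norm x \<le> R"
  shows "hvec (x::real^'d::finite) \<in> boxd (sig (-R))"
  unfolding boxd_def hvec_def
  using sig_range[OF order_trans[OF component_le_norm_cart assms]] by auto

lemma measurable_countable_modify:
  fixes L H :: "real \<Rightarrow> 'b::topological_space"
  assumes A: "countable A" and H: "H \<in> borel_measurable borel"
  shows "(\<lambda>x. if x \<in> A then L x else H x) \<in> borel_measurable borel"
proof (rule borel_measurableI)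
  fix S :: "'b set" assume S: "open S"
  have "(\<lambda>x. if x \<in> A then L x else H x) -` S \<inter> space borel = {x\<in>A. L x \<in> S} \<union> (H -` S - A)"
    by (auto split: if_splits)
  moreover have "{x\<in>A. L x \<in> S} \<in> sets borel"
    by (rule sets.countable) (auto intro: countable_subset[OF _ A])
  moreover have "A \<in> sets borel" by (rule sets.countable[OF _ A]) auto
  moreover have "H -` S \<in> sets borel" using measurable_sets[OF H, of S] S by simp
  ultimately show "(\<lambda>x. if x \<in> A then L x else H x) -` S \<inter> space borel \<in> sets borel" by auto
qed

lemma preimage_notin:
  assumes "f \<in> borel_measurable borel" "closed K"
  shows "{x. f x \<notin> K} \<in> sets borel"
proof -
  have "f -` (-K) \<inter> space borel \<in> sets borel"
    using assms by (intro measurable_sets[OF assms(1)]) (auto intro: borel_open)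
  moreover have "f -` (-K) \<inter> space borel = {x. f x \<notin> K}" by auto
  ultimately show ?thesis by simp
qed

theorem mainTheorem10:
  fixes \<mu> :: "real measure" and Fs :: "nat \<Rightarrow> real \<Rightarrow> real ^ 'd"
  assumes "prob_space \<mu>" and "sets \<mu> = sets borel"
    and "\<And>n. Fs n \<in> borel_measurable \<mu>"
    and "tight_seq (\<lambda>n. distr \<mu> borel (Fs n))"
  shows "\<exists>r F. strict_mono r \<and> F \<in> borel_measurable \<mu> \<and>
           weak_conv_seq (\<lambda>n. distr \<mu> borel (Fs (r n))) (distr \<mu> borel F)"
proof -
  interpret P: prob_space \<mu> by fact
  have sp: "space \<mu> = UNIV" using sets_eq_imp_space_eq[OF assms(2)] by simp
  have mcong: "measurable \<mu> N = measurable borel N" for N :: "'x measure"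
    by (rule measurable_cong_sets[OF assms(2) refl])
  have Fm[measurable]: "Fs n \<in> borel_measurable borel" for n using assms(3)[of n] by (simp only: mcong)
  interpret FB: finite_borel_measure \<mu> by unfold_locales (fact assms(2))
  have tightT: "\<exists>K. compact K \<and> (\<forall>n. measure \<mu> {x. Fs n x \<notin> K} < \<epsilon>)" if \<epsilon>: "\<epsilon> > 0" for \<epsilon>
  proof -
    obtain K where K: "compact K"
      "\<And>n. measure (distr \<mu> borel (Fs n)) (space (distr \<mu> borel (Fs n)) - K) < \<epsilon>"
      using assms(4) \<epsilon> unfolding tight_seq_def by blast
    have "measure (distr \<mu> borel (Fs n)) (space (distr \<mu> borel (Fs n)) - K) = measure \<mu> {x. Fs n x \<notin> K}" for n
    proof -
      have "UNIV - K \<in> sets borel" using compact_imp_closed[OF K(1)] by (auto intro: borel_open)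
      then show ?thesis using assms(3) by (simp add: measure_distr sp vimage_def Collect_neg_eq Compl_eq_Diff_UNIV)
    qed
    then show ?thesis using K by auto
  qed
  define A where "A = {x. measure \<mu> {x} > 0}"
  have cA: "countable A" unfolding A_def by (rule FB.countable_atoms)
  have Ab: "A \<in> sets borel" by (rule sets.countable[OF _ cA]) auto
  have Ab2: "-A \<in> sets borel" using Ab by (simp add: sets.compl_sets)
  have indm[measurable]: "(indicator A :: real \<Rightarrow> real) \<in> borel_measurable borel"
    "(indicator (-A) :: real \<Rightarrow> real) \<in> borel_measurable borel"
    using Ab Ab2 by (auto intro: borel_measurable_indicator)
  have bndA: "\<exists>K. compact K \<and> (\<forall>n. Fs n a \<in> K)" if a: "a \<in> A" for a
  proof -
    from a have ma: "measure \<mu> {a} > 0" by (simp add: A_def)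
    obtain K where K: "compact K" "\<And>n. measure \<mu> {x. Fs n x \<notin> K} < measure \<mu> {a}"
      using tightT[OF ma] by blast
    have "Fs n a \<in> K" for n
    proof (rule ccontr)
      assume "Fs n a \<notin> K"
      then have "{a} \<subseteq> {x. Fs n x \<notin> K}" by auto
      moreover have "{x. Fs n x \<notin> K} \<in> sets \<mu>"
        using preimage_notin[OF Fm compact_imp_closed[OF K(1)]] unfolding assms(2) .
      ultimately have "measure \<mu> {a} \<le> measure \<mu> {x. Fs n x \<notin> K}" by (intro P.finite_measure_mono)
      then show False using K(2)[of n] by simp
    qed
    then show ?thesis using K(1) by blast
  qed
  define xs where "xs j n = (if A = {} then 0 else Fs n (from_nat_into A j))" for j n
  have "bounded (range (xs j))" for j
  proof (cases "A = {}")
    case True then show ?thesis unfolding xs_def by simp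
  next
    case False
    then have "from_nat_into A j \<in> A" by (rule from_nat_into)
    then obtain K where K: "compact K" "\<And>n. Fs n (from_nat_into A j) \<in> K" using bndA by blast
    then show ?thesis unfolding xs_def using False
      by (intro bounded_subset[OF compact_imp_bounded[OF K(1)]]) auto
  qed
  then obtain r0 where r0: "strict_mono r0" "\<And>j. convergent (\<lambda>n. xs j (r0 n))"
    using diag_conv[of xs] by blast
  define Lm where "Lm x = lim (\<lambda>n. Fs (r0 n) x)" for x
  have LmA: "(\<lambda>n. Fs (r0 n) a) \<longlonglongrightarrow> Lm a" if a: "a \<in> A" for a
  proof -
    obtain j where j: "from_nat_into A j = a" using from_nat_into_surj[OF cA a] by blast
    have "A \<noteq> {}" using a by auto
    then have "convergent (\<lambda>n. Fs (r0 n) a)" using r0(2)[of j] j unfolding xs_def by simp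
    then show ?thesis unfolding Lm_def by (simp add: convergent_LIMSEQ_iff)
  qed
  define Mc where "Mc = density \<mu> (indicator (-A))"
  have mA: "-A \<in> sets \<mu>" using Ab assms(2) by auto
  have sMc: "sets Mc = sets borel" unfolding Mc_def using assms(2) by simp
  have Mc_meas: "measure Mc X = measure \<mu> (-A \<inter> X)" if "X \<in> sets borel" for X
    unfolding Mc_def using that assms(2) mA by (intro measure_restricted) auto
  have finMc: "finite_borel_measure Mc"
  proof -
    interpret fm: finite_measure Mc unfolding Mc_def by (rule P.finite_measure_restricted[OF mA])
    show ?thesis by unfold_locales (rule sMc)
  qed
  have noat: "measure Mc {x} = 0" for x
  proof (cases "x \<in> A")
    case True then show ?thesis using Mc_meas[of "{x}"] by simp
  next
    case False
    then have "measure \<mu> {x} = 0" unfolding A_def using measure_nonneg[of \<mu> "{x}"] by simp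
    then show ?thesis using Mc_meas[of "{x}"] False by simp
  qed
  define Y where "Y n x = hvec (Fs (r0 n) x)" for n x
  have Ym: "Y n \<in> borel_measurable borel" for n unfolding Y_def by measurable
  interpret C: core Mc Y
  proof (rule core.intro)
    show "finite_borel_measure Mc" by (rule finMc)
    show "measure Mc {x} = 0" for x by (rule noat)
    show "Y n \<in> borel_measurable borel" for n by (rule Ym)
    show "Y n x \<in> box01" for n x unfolding Y_def by (rule hvec_box)
    fix \<epsilon> :: real assume \<epsilon>: "\<epsilon> > 0"
    obtain K where K: "compact K" "\<And>n. measure \<mu> {x. Fs n x \<notin> K} < \<epsilon>" using tightT[OF \<epsilon>] by blast
    obtain R where R: "\<And>x. x \<in> K \<Longrightarrow> norm x \<le> R"
      using compact_imp_bounded[OF K(1)] unfolding bounded_iff by blast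
    have "measure Mc {x. Y n x \<notin> boxd (sig (-R))} < \<epsilon>" for n
    proof -
      have sub: "{x. Y n x \<notin> boxd (sig (-R))} \<subseteq> {x. Fs (r0 n) x \<notin> K}"
        unfolding Y_def using hvec_boxd R by blast
      have s1: "{x. Y n x \<notin> boxd (sig (-R))} \<in> sets borel"
        using Ym[of n] unfolding boxd_cbox by measurable
      have s2: "{x. Fs (r0 n) x \<notin> K} \<in> sets \<mu>"
        using preimage_notin[OF Fm compact_imp_closed[OF K(1)]] unfolding assms(2) .
      have "measure Mc {x. Y n x \<notin> boxd (sig (-R))} = measure \<mu> (-A \<inter> {x. Y n x \<notin> boxd (sig (-R))})"
        by (rule Mc_meas[OF s1])
      also have "\<dots> \<le> measure \<mu> {x. Fs (r0 n) x \<notin> K}"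
        using sub s2 by (intro P.finite_measure_mono) auto
      also have "\<dots> < \<epsilon>" by (rule K(2))
      finally show ?thesis .
    qed
    moreover have "sig (-R) > 0" by (rule sig_bounds)
    ultimately show "\<exists>\<delta>>0. \<forall>n. measure Mc {x. Y n x \<notin> boxd \<delta>} < \<epsilon>" by blast
  qed
  define F where "F x = (if x \<in> A then Lm x else hinv (C.Psi x))" for x
  have Fmeas: "F \<in> borel_measurable borel"
    unfolding F_def[abs_def] by (rule measurable_countable_modify[OF cA]) measurable
  define r where "r = r0 \<circ> C.rr"
  show ?thesis
  proof (intro exI conjI)
    show "strict_mono r" unfolding r_def using r0(1) C.rr(1) by (rule strict_mono_o)
    show "F \<in> borel_measurable \<mu>" unfolding mcong by (rule Fmeas)
    show "weak_conv_seq (\<lambda>n. distr \<mu> borel (Fs (r n))) (distr \<mu> borel F)"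
      unfolding weak_conv_seq_def
    proof (intro allI impI)
      fix f :: "real^'d \<Rightarrow> real"
      assume f: "continuous_on UNIV f \<and> bounded (range f)"
      have fm[measurable]: "f \<in> borel_measurable borel" using f by (intro borel_measurable_continuous_onI) auto
      obtain B where B: "\<And>y. \<bar>f y\<bar> \<le> B" using f unfolding bounded_iff by auto
      have B0: "0 \<le> B" using B[of 0] by linarith
      define g where "g y = f (hinv y)" for y
      have gm[measurable]: "g \<in> borel_measurable borel" unfolding g_def by measurable
      have gc: "continuous_on box01 g"
        unfolding g_def by (rule continuous_on_compose2[OF _ hinv_cont]) (use f in auto)
      have gb: "\<bar>g y\<bar> \<le> B" for y unfolding g_def by (rule B)
      have intb: "integrable \<mu> h" if "h \<in> borel_measurable borel" "\<And>x. \<bar>h x\<bar> \<le> B" for h :: "real \<Rightarrow> real"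
        using that by (intro P.integrable_const_bound[of _ B]) (auto simp: mcong)
      have dens: "(\<integral>x. h x \<partial>Mc) = (\<integral>x. indicator (-A) x * h x \<partial>\<mu>)" if "h \<in> borel_measurable borel" for h :: "real \<Rightarrow> real"
      proof -
        have "(\<integral>x. h x \<partial>Mc) = (\<integral>x. h x \<partial>density \<mu> (\<lambda>x. ennreal (indicator (-A) x)))"
          unfolding Mc_def by (simp add: ennreal_indicator)
        also have "\<dots> = (\<integral>x. indicator (-A) x *\<^sub>R h x \<partial>\<mu>)"
          using that mA indm by (intro integral_density) (auto simp: mcong)
        finally show ?thesis by simp
      qed
      have split: "(\<integral>x. h x \<partial>\<mu>) = (\<integral>x. indicator A x * h x \<partial>\<mu>) + (\<integral>x. indicator (-A) x * h x \<partial>\<mu>)"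
        if "h \<in> borel_measurable borel" "\<And>x. \<bar>h x\<bar> \<le> B" for h :: "real \<Rightarrow> real"
      proof -
        have i1: "integrable \<mu> (\<lambda>x. indicator A x * h x)"
          using that Ab B0 by (intro intb) (auto simp: indicator_def)
        have i2: "integrable \<mu> (\<lambda>x. indicator (-A) x * h x)"
          using that Ab B0 by (intro intb) (auto simp: indicator_def)
        have "(\<integral>x. h x \<partial>\<mu>) = (\<integral>x. indicator A x * h x + indicator (-A) x * h x \<partial>\<mu>)"
          by (intro Bochner_Integration.integral_cong) (auto simp: indicator_def)
        also have "\<dots> = (\<integral>x. indicator A x * h x \<partial>\<mu>) + (\<integral>x. indicator (-A) x * h x \<partial>\<mu>)"
          using i1 i2 by simp
        finally show ?thesis .
      qed
      have T1: "(\<lambda>n. \<integral>x. indicator A x * f (Fs (r n) x) \<partial>\<mu>) \<longlonglongrightarrow> (\<integral>x. indicator A x * f (F x) \<partial>\<mu>)"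
      proof (rule integral_dominated_convergence[where w="\<lambda>x. B"])
        show "(\<lambda>x. indicator A x * f (F x)) \<in> borel_measurable \<mu>"
          using Fmeas Ab by (simp add: mcong)
        show "(\<lambda>x. indicator A x * f (Fs (r n) x)) \<in> borel_measurable \<mu>" for n
          using Ab by (simp add: mcong)
        show "integrable \<mu> (\<lambda>x. B)" by simp
        show "AE x in \<mu>. (\<lambda>n. indicator A x * f (Fs (r n) x)) \<longlonglongrightarrow> indicator A x * f (F x)"
        proof (rule AE_I2)
          fix x
          show "(\<lambda>n. indicator A x * f (Fs (r n) x)) \<longlonglongrightarrow> indicator A x * f (F x)"
          proof (cases "x \<in> A")
            case True
            have "(\<lambda>n. Fs (r0 (C.rr n)) x) \<longlonglongrightarrow> Lm x"
              using LIMSEQ_subseq_LIMSEQ[OF LmA[OF True] C.rr(1)] by (simp add: o_def)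
            moreover have ic: "isCont f (Lm x)" using f by (simp add: continuous_on_eq_continuous_at)
            ultimately have "(\<lambda>n. f (Fs (r n) x)) \<longlonglongrightarrow> f (Lm x)"
              unfolding r_def o_def using isCont_tendsto_compose by blast
            then show ?thesis using True by (simp add: F_def)
          next
            case False then show ?thesis by simp
          qed
        qed
        show "AE x in \<mu>. norm (indicator A x * f (Fs (r n) x)) \<le> B" for n
          using B B0 by (intro AE_I2) (auto simp: indicator_def)
      qed
      have T2: "(\<lambda>n. \<integral>x. indicator (-A) x * f (Fs (r n) x) \<partial>\<mu>) \<longlonglongrightarrow> (\<integral>x. indicator (-A) x * f (F x) \<partial>\<mu>)"
      proof -
        have a: "(\<integral>x. indicator (-A) x * f (Fs (r n) x) \<partial>\<mu>) = (\<integral>x. g (Y (C.rr n) x) \<partial>Mc)" for n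
        proof -
          have "(\<integral>x. g (Y (C.rr n) x) \<partial>Mc) = (\<integral>x. indicator (-A) x * g (Y (C.rr n) x) \<partial>\<mu>)"
            by (rule dens) (use Ym in measurable)
          also have "\<dots> = (\<integral>x. indicator (-A) x * f (Fs (r n) x) \<partial>\<mu>)"
            by (simp add: g_def Y_def hinv_hvec r_def)
          finally show ?thesis by simp
        qed
        have b: "(\<integral>x. indicator (-A) x * f (F x) \<partial>\<mu>) = (\<integral>x. g (C.Psi x) \<partial>Mc)"
        proof -
          have "(\<integral>x. g (C.Psi x) \<partial>Mc) = (\<integral>x. indicator (-A) x * g (C.Psi x) \<partial>\<mu>)"
            by (rule dens) measurable
          also have "\<dots> = (\<integral>x. indicator (-A) x * f (F x) \<partial>\<mu>)"
            by (intro Bochner_Integration.integral_cong) (auto simp: g_def F_def indicator_def)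
          finally show ?thesis by simp
        qed
        show ?thesis unfolding a b by (rule C.core_conv[OF gc gb gm])
      qed
      have "(\<lambda>n. \<integral>x. f (Fs (r n) x) \<partial>\<mu>) \<longlonglongrightarrow> (\<integral>x. f (F x) \<partial>\<mu>)"
      proof -
        have e1: "(\<integral>x. f (Fs (r n) x) \<partial>\<mu>) = (\<integral>x. indicator A x * f (Fs (r n) x) \<partial>\<mu>) + (\<integral>x. indicator (-A) x * f (Fs (r n) x) \<partial>\<mu>)" for n
          by (rule split) (use B in auto)
        have e2: "(\<integral>x. f (F x) \<partial>\<mu>) = (\<integral>x. indicator A x * f (F x) \<partial>\<mu>) + (\<integral>x. indicator (-A) x * f (F x) \<partial>\<mu>)"
          by (rule split) (use B Fmeas in auto)
        show ?thesis unfolding e1 e2 by (intro tendsto_add T1 T2)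
      qed
      moreover have "(\<integral>x. f x \<partial>distr \<mu> borel (Fs (r n))) = (\<integral>x. f (Fs (r n) x) \<partial>\<mu>)" for n
        by (rule integral_distr) (use assms(3) in auto)
      moreover have "(\<integral>x. f x \<partial>distr \<mu> borel F) = (\<integral>x. f (F x) \<partial>\<mu>)"
        by (rule integral_distr) (use Fmeas mcong in auto)
      ultimately show "(\<lambda>n. \<integral>x. f x \<partial>distr \<mu> borel (Fs (r n))) \<longlonglongrightarrow> (\<integral>x. f x \<partial>distr \<mu> borel F)"
        by simp
    qed
  qed
qed

end
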